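(* Let $M$ be a finitely generated monoid and let $I$ be an ideal of $M$. If $M$ is strongly $\delta$-hyperbolic (with respect to some finite generating set, for some real $\delta\ge 0$) then the Rees quotient $M/I$ is strongly hyperbolic.
   Context: Directed graphs may have loops and multiple edges; $d(u,v)$ is the length of a shortest directed path from $u$ to $v$ ($\infty$ if none). Out-ball $\overrightarrow{\mathcal{B}}_r(x)=\{y : d(x,y)\le r\}$, in-ball $\overleftarrow{\mathcal{B}}_r(x)=\{y : d(y,x)\le r\}$, extended to sets by union. A path $[x_0,\dots,x_n]$ is a geodesic if $n=d(x_0,x_n)$. A directed geodesic triangle is an ordered triple $(p,q,r)$ of geodesics with the end of $p$ equal to the start of $q$ and $p\circ q$ having the same start and end as $r$; it is $\delta$-thin if every vertex of $r$ lies in $\overrightarrow{\mathcal{B}}_\delta(p)\cup\overleftarrow{\mathcal{B}}_\delta(q)$, every vertex of $p$ lies in $\overrightarrow{\mathcal{B}}_\delta(r)\cup\overleftarrow{\mathcal{B}}_\delta(q)$, and every vertex of $q$ lies in $\overrightarrow{\mathcal{B}}_\delta(p)\cup\overleftarrow{\mathcal{B}}_\delta(r)$. A directed graph is strongly $\delta$-hyperbolic if all its directed geodesic triangles are $\delta$-thin. A monoid generated by a finite set $A$ is strongly $\delta$-hyperbolic w.r.t. $A$ if its right Cayley graph (vertex set the monoid, edge $m\to n$ for each $a\in A$ with $ma=n$) is strongly $\delta$-hyperbolic; it is strongly hyperbolic if this holds for some finite generating set and some $\delta$. The Rees quotient $M/I$ is $(M\setminus I)\cup\{0\}$ with the product of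 $x,y$ equal to $xy$ if $xy\notin I$ and $0$ otherwise (and $0$ a zero element). *)

theory Defs
  imports Complex_Main "HOL-Algebra.Group"
begin

text \<open>A path is a nonempty list of vertices with consecutive vertices joined by edges;
its length is the number of edges. Multiple edges are irrelevant for paths-as-vertex-lists.\<close>

definition is_dpath :: "'v set \<Rightarrow> ('v \<Rightarrow> 'v \<Rightarrow> bool) \<Rightarrow> 'v list \<Rightarrow> bool" where
  "is_dpath V E xs \<longleftrightarrow> xs \<noteq> [] \<and> set xs \<subseteq> V \<and>
     (\<forall>i. Suc i < length xs \<longrightarrow> E (xs ! i) (xs ! Suc i))"

definition has_path_len :: "'v set \<Rightarrow> ('v \<Rightarrow> 'v \<Rightarrow> bool) \<Rightarrow> 'v \<Rightarrow> 'v \<Rightarrow> nat \<Rightarrow> bool" where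
  "has_path_len V E u v n \<longleftrightarrow>
     (\<exists>xs. is_dpath V E xs \<and> hd xs = u \<and> last xs = v \<and> length xs = Suc n)"

text \<open>d(u,v) \<le> r  (false if d(u,v) = \<infinity>)\<close>
definition dist_le :: "'v set \<Rightarrow> ('v \<Rightarrow> 'v \<Rightarrow> bool) \<Rightarrow> 'v \<Rightarrow> 'v \<Rightarrow> real \<Rightarrow> bool" where
  "dist_le V E u v r \<longleftrightarrow> (\<exists>n. real n \<le> r \<and> has_path_len V E u v n)"

definition geodesic :: "'v set \<Rightarrow> ('v \<Rightarrow> 'v \<Rightarrow> bool) \<Rightarrow> 'v list \<Rightarrow> bool" where
  "geodesic V E xs \<longleftrightarrow> is_dpath V E xs \<and>
     (\<forall>m. has_path_len V E (hd xs) (last xs) m \<longrightarrow> length xs - 1 \<le> m)"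

definition out_ball :: "'v set \<Rightarrow> ('v \<Rightarrow> 'v \<Rightarrow> bool) \<Rightarrow> real \<Rightarrow> 'v set \<Rightarrow> 'v set" where
  "out_ball V E r S = {y \<in> V. \<exists>x\<in>S. dist_le V E x y r}"

definition in_ball :: "'v set \<Rightarrow> ('v \<Rightarrow> 'v \<Rightarrow> bool) \<Rightarrow> real \<Rightarrow> 'v set \<Rightarrow> 'v set" where
  "in_ball V E r S = {y \<in> V. \<exists>x\<in>S. dist_le V E y x r}"

definition geodesic_triangle ::
  "'v set \<Rightarrow> ('v \<Rightarrow> 'v \<Rightarrow> bool) \<Rightarrow> 'v list \<Rightarrow> 'v list \<Rightarrow> 'v list \<Rightarrow> bool" where
  "geodesic_triangle V E p q r \<longleftrightarrow> geodesic V E p \<and> geodesic V E q \<and> geodesic V E r \<and>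
     last p = hd q \<and> hd r = hd p \<and> last r = last q"

definition thin_triangle ::
  "'v set \<Rightarrow> ('v \<Rightarrow> 'v \<Rightarrow> bool) \<Rightarrow> real \<Rightarrow> 'v list \<Rightarrow> 'v list \<Rightarrow> 'v list \<Rightarrow> bool" where
  "thin_triangle V E \<delta> p q r \<longleftrightarrow>
     set r \<subseteq> out_ball V E \<delta> (set p) \<union> in_ball V E \<delta> (set q) \<and>
     set p \<subseteq> out_ball V E \<delta> (set r) \<union> in_ball V E \<delta> (set q) \<and>
     set q \<subseteq> out_ball V E \<delta> (set p) \<union> in_ball V E \<delta> (set r)"

definition strongly_hyperbolic_graph ::
  "'v set \<Rightarrow> ('v \<Rightarrow> 'v \<Rightarrow> bool) \<Rightarrow> real \<Rightarrow> bool" where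
  "strongly_hyperbolic_graph V E \<delta> \<longleftrightarrow>
     (\<forall>p q r. geodesic_triangle V E p q r \<longrightarrow> thin_triangle V E \<delta> p q r)"

definition generates :: "('a, 'b) monoid_scheme \<Rightarrow> 'a set \<Rightarrow> bool" where
  "generates M A \<longleftrightarrow> A \<subseteq> carrier M \<and>
     (\<forall>x\<in>carrier M. \<exists>as\<in>lists A. x = foldr (\<otimes>\<^bsub>M\<^esub>) as \<one>\<^bsub>M\<^esub>)"

definition finitely_generated_monoid :: "('a, 'b) monoid_scheme \<Rightarrow> bool" where
  "finitely_generated_monoid M \<longleftrightarrow> (\<exists>A. finite A \<and> generates M A)"

definition cayley_edge :: "('a, 'b) monoid_scheme \<Rightarrow> 'a set \<Rightarrow> 'a \<Rightarrow> 'a \<Rightarrow> bool" where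
  "cayley_edge M A m n \<longleftrightarrow> m \<in> carrier M \<and> (\<exists>a\<in>A. m \<otimes>\<^bsub>M\<^esub> a = n)"

definition strongly_hyperbolic_wrt ::
  "('a, 'b) monoid_scheme \<Rightarrow> 'a set \<Rightarrow> real \<Rightarrow> bool" where
  "strongly_hyperbolic_wrt M A \<delta> \<longleftrightarrow>
     strongly_hyperbolic_graph (carrier M) (cayley_edge M A) \<delta>"

definition strongly_hyperbolic_monoid :: "('a, 'b) monoid_scheme \<Rightarrow> bool" where
  "strongly_hyperbolic_monoid M \<longleftrightarrow>
     (\<exists>A \<delta>. finite A \<and> generates M A \<and> strongly_hyperbolic_wrt M A \<delta>)"

definition monoid_ideal :: "('a, 'b) monoid_scheme \<Rightarrow> 'a set \<Rightarrow> bool" where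
  "monoid_ideal M I \<longleftrightarrow> I \<subseteq> carrier M \<and> I \<noteq> {} \<and>
     (\<forall>x\<in>carrier M. \<forall>i\<in>I. x \<otimes>\<^bsub>M\<^esub> i \<in> I \<and> i \<otimes>\<^bsub>M\<^esub> x \<in> I)"

text \<open>Rees quotient M/I: elements of M - I are Some m, the zero is None.\<close>
definition rees_quotient :: "('a, 'b) monoid_scheme \<Rightarrow> 'a set \<Rightarrow> 'a option monoid" where
  "rees_quotient M I =
     \<lparr> carrier = Some ` (carrier M - I) \<union> {None},
       mult = (\<lambda>x y. case (x, y) of
                 (Some a, Some b) \<Rightarrow> (if a \<otimes>\<^bsub>M\<^esub> b \<in> I then None else Some (a \<otimes>\<^bsub>M\<^esub> b))
               | _ \<Rightarrow> None),
       one = (if \<one>\<^bsub>M\<^esub> \<in> I then None else Some \<one>\<^bsub>M\<^esub>) \<rparr>"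

end

theory Submission
  imports Defs
begin

lemma is_dpath_Cons:
  "is_dpath V E (x#xs) \<longleftrightarrow> x \<in> V \<and> (xs \<noteq> [] \<longrightarrow> E x (hd xs) \<and> is_dpath V E xs)"
proof (cases xs)
  case Nil
  then show ?thesis by (auto simp: is_dpath_def)
next
  case (Cons y ys)
  show ?thesis
  proof
    assume h: "is_dpath V E (x#xs)"
    have h1: "\<And>i. Suc i < Suc (Suc (length ys)) \<Longrightarrow> E ((x#y#ys) ! i) ((x#y#ys) ! Suc i)"
      using h Cons by (simp add: is_dpath_def)
    have "E x (hd xs)" using h1[of 0] Cons by simp
    moreover have "is_dpath V E xs" unfolding is_dpath_def
    proof (intro conjI allI impI)
      show "xs \<noteq> []" using Cons by simp
      show "set xs \<subseteq> V" using h by (simp add: is_dpath_def)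
      fix i assume "Suc i < length xs"
      then have "Suc (Suc i) < Suc (Suc (length ys))" using Cons by simp
      from h1[OF this] show "E (xs ! i) (xs ! Suc i)" using Cons by simp
    qed
    ultimately show "x \<in> V \<and> (xs \<noteq> [] \<longrightarrow> E x (hd xs) \<and> is_dpath V E xs)"
      using h by (simp add: is_dpath_def)
  next
    assume h: "x \<in> V \<and> (xs \<noteq> [] \<longrightarrow> E x (hd xs) \<and> is_dpath V E xs)"
    show "is_dpath V E (x#xs)" unfolding is_dpath_def
    proof (intro conjI allI impI)
      show "set (x # xs) \<subseteq> V" using h Cons by (simp add: is_dpath_def)
      fix i assume i: "Suc i < length (x#xs)"
      show "E ((x # xs) ! i) ((x # xs) ! Suc i)"
      proof (cases i)
        case 0 then show ?thesis using h Cons by simp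
      next
        case (Suc j)
        then have "Suc j < length xs" using i by simp
        then show ?thesis using h Cons Suc by (simp add: is_dpath_def)
      qed
    qed simp
  qed
qed

lemma dist_le_mono: "dist_le V E x y d \<Longrightarrow> d \<le> d' \<Longrightarrow> dist_le V E x y d'"
  unfolding dist_le_def by force

locale rq =
  fixes M :: "('a,'b) monoid_scheme" and I :: "'a set" and A :: "'a set"
  assumes mon: "monoid M" and idl: "monoid_ideal M I" and AM: "A \<subseteq> carrier M" and gM: "generates M A"
begin

abbreviation "Q \<equiv> rees_quotient M I"
abbreviation "A' \<equiv> Some ` (A - I) \<union> {None}"
abbreviation "V \<equiv> carrier M"
abbreviation "E \<equiv> cayley_edge M A"
abbreviation "V' \<equiv> carrier Q"
abbreviation "E' \<equiv> cayley_edge Q A'"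

lemma carrierQ: "V' = Some ` (V - I) \<union> {None}" by (simp add: rees_quotient_def)

lemma multQ: "mult Q x y = (case (x,y) of (Some a, Some b) \<Rightarrow>
   (if a \<otimes>\<^bsub>M\<^esub> b \<in> I then None else Some (a \<otimes>\<^bsub>M\<^esub> b)) | _ \<Rightarrow> None)"
  by (simp add: rees_quotient_def)

lemma I_sub: "I \<subseteq> V" using idl by (simp add: monoid_ideal_def)

lemma E'_None: "x \<in> V' \<Longrightarrow> E' x None"
  unfolding cayley_edge_def by (rule conjI, simp, rule bexI[of _ None]) (auto simp: multQ split: option.splits)

lemma E'_from_None: "E' None y \<Longrightarrow> y = None"
  unfolding cayley_edge_def by (auto simp: multQ)

lemma E'_Some: assumes m: "m \<in> V - I" and n: "n \<in> V - I"
  shows "E' (Some m) (Some n) \<longleftrightarrow> E m n"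
proof
  assume "E' (Some m) (Some n)"
  then obtain a where a: "a \<in> A'" "mult Q (Some m) a = Some n" unfolding cayley_edge_def by blast
  then obtain b where b: "a = Some b" "b \<in> A - I" by (auto simp: multQ)
  then have "m \<otimes>\<^bsub>M\<^esub> b = n" using a by (auto simp: multQ split: if_splits)
  then show "E m n" using m b unfolding cayley_edge_def by blast
next
  assume "E m n"
  then obtain a where a: "a \<in> A" "m \<otimes>\<^bsub>M\<^esub> a = n" unfolding cayley_edge_def by blast
  have "a \<notin> I"
  proof
    assume "a \<in> I"
    then have "m \<otimes>\<^bsub>M\<^esub> a \<in> I" using idl m unfolding monoid_ideal_def by blast
    then show False using a n by simp
  qed
  then have "Some a \<in> A'" using a by blast
  moreover have "mult Q (Some m) (Some a) = Some n" using a n by (simp add: multQ)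
  moreover have "Some m \<in> V'" using m by (simp add: carrierQ)
  ultimately show "E' (Some m) (Some n)" unfolding cayley_edge_def by blast
qed

lemma E_I: "E m n \<Longrightarrow> m \<in> I \<Longrightarrow> n \<in> I"
  unfolding cayley_edge_def using idl AM unfolding monoid_ideal_def by blast

lemma P1: "is_dpath V E xs \<Longrightarrow> last xs \<notin> I \<Longrightarrow> set xs \<subseteq> V - I"
proof (induction xs)
  case Nil then show ?case by (simp add: is_dpath_def)
next
  case (Cons x xs)
  show ?case
  proof (cases xs)
    case Nil then show ?thesis using Cons.prems by (auto simp: is_dpath_def)
  next
    case (Cons y ys)
    with Cons.prems have "E x (hd xs)" "is_dpath V E xs" "last xs \<notin> I" "x \<in> V"
      by (auto simp: is_dpath_Cons)
    with Cons.IH have "set xs \<subseteq> V - I" by simp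
    moreover have "x \<notin> I" using E_I \<open>E x (hd xs)\<close> calculation Cons by auto
    ultimately show ?thesis using \<open>x \<in> V\<close> by simp
  qed
qed

lemma P2: "is_dpath V E xs \<Longrightarrow> set xs \<subseteq> V - I \<Longrightarrow> is_dpath V' E' (map Some xs)"
proof (induction xs)
  case Nil then show ?case by (simp add: is_dpath_def)
next
  case (Cons x xs)
  show ?case
  proof (cases xs)
    case Nil then show ?thesis using Cons.prems by (auto simp: is_dpath_Cons carrierQ)
  next
    case (Cons a l)
    with Cons.prems have h: "E x a" "is_dpath V E xs" "x \<in> V - I" "a \<in> V - I" "set xs \<subseteq> V - I"
      by (auto simp: is_dpath_Cons)
    then have "E' (Some x) (Some a)" using E'_Some by blast
    moreover have "is_dpath V' E' (map Some xs)" using Cons.IH h by blast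
    ultimately show ?thesis using h Cons by (auto simp: is_dpath_Cons carrierQ)
  qed
qed

lemma P3: "is_dpath V' E' ys \<Longrightarrow> None \<notin> set ys \<Longrightarrow>
   \<exists>xs. ys = map Some xs \<and> set xs \<subseteq> V - I \<and> is_dpath V E xs"
proof (induction ys)
  case Nil then show ?case by (simp add: is_dpath_def)
next
  case (Cons y ys)
  then obtain x where x: "y = Some x" "x \<in> V - I" by (auto simp: is_dpath_Cons carrierQ)
  show ?case
  proof (cases ys)
    case Nil then show ?thesis using x by (intro exI[of _ "[x]"]) (auto simp: is_dpath_def)
  next
    case (Cons z zs)
    have "is_dpath V' E' ys" "None \<notin> set ys" using Cons.prems Cons by (auto simp: is_dpath_Cons)
    with Cons.IH obtain xs where xs: "ys = map Some xs" "set xs \<subseteq> V - I" "is_dpath V E xs"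
      by blast
    have "E' y (hd ys)" using Cons.prems Cons by (auto simp: is_dpath_Cons)
    moreover obtain w ws where w: "xs = w # ws" using xs Cons by (cases xs) auto
    ultimately have "E x (hd xs)" using xs x E'_Some by auto
    then show ?thesis using xs x Cons by (intro exI[of _ "x#xs"]) (auto simp: is_dpath_Cons)
  qed
qed

lemma P4: "is_dpath V' E' ys \<Longrightarrow> hd ys = None \<Longrightarrow> set ys \<subseteq> {None}"
proof (induction ys)
  case Nil then show ?case by simp
next
  case (Cons y ys)
  then show ?case using E'_from_None by (cases ys) (auto simp: is_dpath_Cons)
qed

lemma P5: "is_dpath V' E' ys \<Longrightarrow> None \<in> set ys \<Longrightarrow> last ys = None"
proof (induction ys)
  case Nil then show ?case by simp
next
  case (Cons y ys)
  show ?case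
  proof (cases "y = None")
    case True
    then have "set (y#ys) \<subseteq> {None}" using P4[OF Cons.prems(1)] by simp
    then show ?thesis by (metis last_in_set list.discI singletonD subsetD)
  next
    case False
    then show ?thesis using Cons by (cases ys) (auto simp: is_dpath_Cons)
  qed
qed

lemma hpl: "m \<in> V - I \<Longrightarrow> n \<in> V - I \<Longrightarrow> has_path_len V E m n k \<Longrightarrow> has_path_len V' E' (Some m) (Some n) k"
  unfolding has_path_len_def
proof -
  assume "m \<in> V - I" "n \<in> V - I" and "\<exists>xs. is_dpath V E xs \<and> hd xs = m \<and> last xs = n \<and> length xs = Suc k"
  then obtain xs where xs: "is_dpath V E xs" "hd xs = m" "last xs = n" "length xs = Suc k" by blast
  then have "set xs \<subseteq> V - I" using P1 \<open>n \<in> V - I\<close> by auto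
  then have "is_dpath V' E' (map Some xs)" using P2 xs by simp
  moreover have "xs \<noteq> []" using xs by auto
  ultimately show "\<exists>ys. is_dpath V' E' ys \<and> hd ys = Some m \<and> last ys = Some n \<and> length ys = Suc k"
    using xs by (intro exI[of _ "map Some xs"]) (auto simp: hd_map last_map)
qed

lemma dl: "m \<in> V - I \<Longrightarrow> n \<in> V - I \<Longrightarrow> dist_le V E m n d \<Longrightarrow> dist_le V' E' (Some m) (Some n) d"
  unfolding dist_le_def using hpl by blast

lemma geo: "geodesic V' E' (map Some xs) \<Longrightarrow> set xs \<subseteq> V - I \<Longrightarrow> is_dpath V E xs \<Longrightarrow> geodesic V E xs"
  unfolding geodesic_def
proof (intro conjI allI impI)
  fix k assume g: "is_dpath V' E' (map Some xs) \<and> (\<forall>m. has_path_len V' E' (hd (map Some xs)) (last (map Some xs)) m \<longrightarrow> length (map Some xs) - 1 \<le> m)"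
    and s: "set xs \<subseteq> V - I" and p: "is_dpath V E xs" and h: "has_path_len V E (hd xs) (last xs) k"
  have ne: "xs \<noteq> []" using p by (simp add: is_dpath_def)
  have "has_path_len V' E' (Some (hd xs)) (Some (last xs)) k"
    using hpl[OF _ _ h] s ne hd_in_set[OF ne] last_in_set[OF ne] by blast
  then show "length xs - 1 \<le> k" using g ne by (auto simp: hd_map last_map)
qed

lemma ball_None: "y \<in> V' \<Longrightarrow> None \<in> S \<Longrightarrow> d \<ge> 1 \<Longrightarrow> y \<in> in_ball V' E' d S"
  unfolding in_ball_def dist_le_def has_path_len_def
  apply (simp, rule bexI[of _ None], rule exI[of _ 1], simp, rule exI[of _ "[y, None]"])
  using E'_None by (auto simp: is_dpath_def carrierQ less_Suc_eq)

lemma tr: "T \<subseteq> V-I \<Longrightarrow> S1 \<subseteq> V-I \<Longrightarrow> S2 \<subseteq> V-I \<Longrightarrow>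
  T \<subseteq> out_ball V E d S1 \<union> in_ball V E d S2 \<Longrightarrow> d \<le> d' \<Longrightarrow>
  Some ` T \<subseteq> out_ball V' E' d' (Some ` S1) \<union> in_ball V' E' d' (Some ` S2)"
proof
  fix z assume T: "T \<subseteq> V-I" and S: "S1 \<subseteq> V-I" "S2 \<subseteq> V-I"
    and sub: "T \<subseteq> out_ball V E d S1 \<union> in_ball V E d S2" and dd: "d \<le> d'" and z: "z \<in> Some ` T"
  then obtain y where y: "z = Some y" "y \<in> T" by blast
  have yV: "Some y \<in> V'" using y T by (auto simp: carrierQ)
  from sub y consider (o) x where "x \<in> S1" "dist_le V E x y d" | (i) x where "x \<in> S2" "dist_le V E y x d"
    unfolding out_ball_def in_ball_def by blast
  then show "z \<in> out_ball V' E' d' (Some ` S1) \<union> in_ball V' E' d' (Some ` S2)"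
  proof cases
    case o
    have xI: "x \<in> V-I" using o S by blast
    have yI: "y \<in> V-I" using y T by blast
    have "dist_le V E x y d'" using o(2) dd by (rule dist_le_mono)
    then have "dist_le V' E' (Some x) (Some y) d'" by (rule dl[OF xI yI])
    then show ?thesis using o yV y unfolding out_ball_def by blast
  next
    case i
    have xI: "x \<in> V-I" using i S by blast
    have yI: "y \<in> V-I" using y T by blast
    have "dist_le V E y x d'" using i(2) dd by (rule dist_le_mono)
    then have "dist_le V' E' (Some y) (Some x) d'" by (rule dl[OF yI xI])
    then show ?thesis using i yV y unfolding in_ball_def by blast
  qed
qed

lemma fold_closed: "as \<in> lists A \<Longrightarrow> foldr (\<otimes>\<^bsub>M\<^esub>) as \<one>\<^bsub>M\<^esub> \<in> V"
  by (induction as) (use AM mon in \<open>auto simp: monoid.m_closed monoid.one_closed\<close>)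

lemma fold_lift: "as \<in> lists A \<Longrightarrow> foldr (\<otimes>\<^bsub>M\<^esub>) as \<one>\<^bsub>M\<^esub> \<notin> I \<Longrightarrow>
   foldr (mult Q) (map Some as) (one Q) = Some (foldr (\<otimes>\<^bsub>M\<^esub>) as \<one>\<^bsub>M\<^esub>) \<and> set as \<inter> I = {}"
proof (induction as)
  case Nil then show ?case by (simp add: rees_quotient_def)
next
  case (Cons a as)
  let ?r = "foldr (\<otimes>\<^bsub>M\<^esub>) as \<one>\<^bsub>M\<^esub>"
  have a: "a \<in> V" "as \<in> lists A" using Cons.prems AM by auto
  have rV: "?r \<in> V" using fold_closed a by blast
  have ar: "a \<otimes>\<^bsub>M\<^esub> ?r \<notin> I" using Cons.prems by simp
  have "?r \<notin> I" using ar idl a unfolding monoid_ideal_def by blast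
  moreover have "a \<notin> I" using ar idl rV unfolding monoid_ideal_def by blast
  ultimately show ?case using Cons.IH a ar by (simp add: multQ)
qed

lemma gen: "generates Q A'"
  unfolding generates_def
proof (intro conjI ballI)
  show "A' \<subseteq> V'" using AM by (auto simp: carrierQ)
  fix x assume "x \<in> V'"
  then consider "x = None" | y where "x = Some y" "y \<in> V - I" by (auto simp: carrierQ)
  then show "\<exists>as\<in>lists A'. x = foldr (mult Q) as (one Q)"
  proof cases
    case 1 then show ?thesis by (intro bexI[of _ "[None]"]) (auto simp: multQ)
  next
    case 2
    then obtain as where as: "as \<in> lists A" "y = foldr (\<otimes>\<^bsub>M\<^esub>) as \<one>\<^bsub>M\<^esub>"
      using gM unfolding generates_def by blast
    have "foldr (mult Q) (map Some as) (one Q) = x \<and> set as \<inter> I = {}"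
      using fold_lift[OF as(1)] as 2 by auto
    moreover have "map Some as \<in> lists A'"
    proof -
      have "\<forall>z\<in>set as. z \<in> A - I" using as(1) calculation by blast
      then show ?thesis by (induction as) auto
    qed
    ultimately show ?thesis by metis
  qed
qed

lemma ball_sub: "T \<subseteq> V' \<Longrightarrow> None \<in> S \<Longrightarrow> 1 \<le> d \<Longrightarrow> T \<subseteq> in_ball V' E' d S"
proof
  fix y assume "T \<subseteq> V'" "None \<in> S" "1 \<le> d" "y \<in> T"
  then show "y \<in> in_ball V' E' d S" using ball_None[of y S d] by blast
qed

lemma geo_path: "geodesic V E xs \<Longrightarrow> is_dpath V E xs" by (simp add: geodesic_def)

lemma hyp:
  assumes H: "strongly_hyperbolic_wrt M A \<delta>" and d0: "\<delta> \<ge> 0"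
  shows "strongly_hyperbolic_wrt Q A' (\<delta>+1)"
  unfolding strongly_hyperbolic_wrt_def strongly_hyperbolic_graph_def
proof (intro allI impI)
  fix p q r assume tri: "geodesic_triangle V' E' p q r"
  then have gp: "is_dpath V' E' p" and gq: "is_dpath V' E' q" and gr: "is_dpath V' E' r"
    and pq: "last p = hd q" and rp: "hd r = hd p" and rq: "last r = last q"
    and Gp: "geodesic V' E' p" and Gq: "geodesic V' E' q" and Gr: "geodesic V' E' r"
    by (auto simp: geodesic_triangle_def geodesic_def)
  have ne: "p \<noteq> []" "q \<noteq> []" "r \<noteq> []" using gp gq gr by (auto simp: is_dpath_def)
  have sV: "set p \<subseteq> V'" "set q \<subseteq> V'" "set r \<subseteq> V'" using gp gq gr by (auto simp: is_dpath_def)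
  show "thin_triangle V' E' (\<delta>+1) p q r"
  proof (cases "last q = None")
    case True
    then have "None \<in> set q" "None \<in> set r" using ne rq last_in_set by metis+
    moreover have d1: "1 \<le> \<delta>+1" using d0 by simp
    ultimately have "set r \<subseteq> in_ball V' E' (\<delta>+1) (set q)" "set p \<subseteq> in_ball V' E' (\<delta>+1) (set q)"
      "set q \<subseteq> in_ball V' E' (\<delta>+1) (set r)"
      using ball_sub[OF sV(3)] ball_sub[OF sV(1)] ball_sub[OF sV(2)] by simp_all
    then show ?thesis unfolding thin_triangle_def by blast
  next
    case False
    have nq: "None \<notin> set q"
    proof
      assume "None \<in> set q"
      then have "last q = None" by (rule P5[OF gq])
      then show False using False by simp
    qed
    have nr: "None \<notin> set r"
    proof
      assume "None \<in> set r"
      then have "last r = None" by (rule P5[OF gr])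
      then show False using False rq by simp
    qed
    have np: "None \<notin> set p"
    proof
      assume "None \<in> set p"
      then have "hd q = None" using P5[OF gp] pq by simp
      then have "set q \<subseteq> {None}" using P4[OF gq] by simp
      moreover have "last q \<in> set q" using ne(2) by simp
      ultimately show False using False by auto
    qed
    obtain xp where xp: "p = map Some xp" "set xp \<subseteq> V - I" "is_dpath V E xp" using P3[OF gp np] by blast
    obtain xq where xq: "q = map Some xq" "set xq \<subseteq> V - I" "is_dpath V E xq" using P3[OF gq nq] by blast
    obtain xr where xr: "r = map Some xr" "set xr \<subseteq> V - I" "is_dpath V E xr" using P3[OF gr nr] by blast
    have nx: "xp \<noteq> []" "xq \<noteq> []" "xr \<noteq> []" using ne xp xq xr by auto
    have "geodesic V E xp" using Gp unfolding xp(1) by (rule geo[OF _ xp(2) xp(3)])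
    moreover have "geodesic V E xq" using Gq unfolding xq(1) by (rule geo[OF _ xq(2) xq(3)])
    moreover have "geodesic V E xr" using Gr unfolding xr(1) by (rule geo[OF _ xr(2) xr(3)])
    moreover have "last xp = hd xq" using pq xp(1) xq(1) nx by (simp add: hd_map last_map)
    moreover have "hd xr = hd xp" using rp xp(1) xr(1) nx by (simp add: hd_map last_map)
    moreover have "last xr = last xq" using rq xr(1) xq(1) nx by (simp add: hd_map last_map)
    ultimately have "geodesic_triangle V E xp xq xr"
      unfolding geodesic_triangle_def by blast
    then have "thin_triangle V E \<delta> xp xq xr" using H
      by (simp add: strongly_hyperbolic_wrt_def strongly_hyperbolic_graph_def)
    then have t: "set xr \<subseteq> out_ball V E \<delta> (set xp) \<union> in_ball V E \<delta> (set xq)"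
      "set xp \<subseteq> out_ball V E \<delta> (set xr) \<union> in_ball V E \<delta> (set xq)"
      "set xq \<subseteq> out_ball V E \<delta> (set xp) \<union> in_ball V E \<delta> (set xr)"
      unfolding thin_triangle_def by blast+
    have dd: "\<delta> \<le> \<delta>+1" by simp
    have "Some ` set xr \<subseteq> out_ball V' E' (\<delta>+1) (Some ` set xp) \<union> in_ball V' E' (\<delta>+1) (Some ` set xq)"
      by (rule tr[OF xr(2) xp(2) xq(2) t(1) dd])
    moreover have "Some ` set xp \<subseteq> out_ball V' E' (\<delta>+1) (Some ` set xr) \<union> in_ball V' E' (\<delta>+1) (Some ` set xq)"
      by (rule tr[OF xp(2) xr(2) xq(2) t(2) dd])
    moreover have "Some ` set xq \<subseteq> out_ball V' E' (\<delta>+1) (Some ` set xp) \<union> in_ball V' E' (\<delta>+1) (Some ` set xr)"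
      by (rule tr[OF xq(2) xp(2) xr(2) t(3) dd])
    ultimately show ?thesis unfolding thin_triangle_def xp(1) xq(1) xr(1) set_map by blast
  qed
qed

end

theorem proposition4p8:
  fixes M :: "('a, 'b) monoid_scheme" and I :: "'a set" and A :: "'a set" and \<delta> :: real
  assumes "monoid M"
    and "finitely_generated_monoid M"
    and "monoid_ideal M I"
    and "finite A" and "generates M A" and "\<delta> \<ge> 0"
    and "strongly_hyperbolic_wrt M A \<delta>"
  shows "strongly_hyperbolic_monoid (rees_quotient M I)"
proof -
  interpret rq M I A by (rule rq.intro) (use assms in \<open>auto simp: generates_def\<close>)
  show ?thesis unfolding strongly_hyperbolic_monoid_def
    using gen hyp assms by (intro exI[of _ A'] exI[of _ "\<delta>+1"]) auto
qed

end
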